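(* Let $n\ge 3$ and $\varphi$ a linear functional with $\varphi(e_i)=a_i$, $0<a_1<\dots<a_n$. Every $\varphi$-monotone path on $\diamond^n$ is at distance at most $n-2$ in the flip graph from some coherent monotone path, and this bound is attained (e.g. by the path with vertices $-e_n,-e_{n-1},\dots,-e_1,e_2,\dots,e_{n-1},e_n$).
   Context: $\diamond^n=\mathrm{conv}\{\pm e_1,\dots,\pm e_n\}$. A monotone path is a sequence of vertices $-e_n=v_0,\dots,v_m=e_n$ with $v_{j-1}\neq -v_j$ and $\varphi(v_{j-1})<\varphi(v_j)$. The flip graph has the monotone paths as vertices, two being adjacent when one is obtained from the other by inserting or deleting a single vertex. A monotone path is coherent if there is a linear functional $\psi$ such that for $\pi=(\varphi,\psi):\mathbb{R}^n\to\mathbb{R}^2$ the images $\pi(v_0),\dots,\pi(v_m)$ are exactly the lower vertices of the polygon $\pi(\diamond^n)$ in order and each edge $[v_{j-1},v_j]$ is the preimage in $\diamond^n$ of a lower edge; for $\diamond^n$ this holds exactly when the path contains no antipodal pair other than $\{-e_n,e_n\}$. *)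

theory Defs
  imports "HOL-Analysis.Analysis"
begin

text \<open>Points of R^n are represented as coefficient functions nat => real; only the
coordinates 1..n are used (the vertices below are supported in {1..n}).\<close>

definition unitv :: "nat \<Rightarrow> (nat \<Rightarrow> real)" where
  "unitv i = (\<lambda>j. if j = i then 1 else 0)"

definition negv :: "(nat \<Rightarrow> real) \<Rightarrow> (nat \<Rightarrow> real)" where
  "negv v = (\<lambda>j. - v j)"

definition cross_vertices :: "nat \<Rightarrow> (nat \<Rightarrow> real) set" where
  "cross_vertices n = {unitv i | i. 1 \<le> i \<and> i \<le> n} \<union> {negv (unitv i) | i. 1 \<le> i \<and> i \<le> n}"

definition fconv :: "(nat \<Rightarrow> real) set \<Rightarrow> (nat \<Rightarrow> real) set" where
  "fconv V = {(\<lambda>j. \<Sum>v\<in>V. \<mu> v * v j) | \<mu>. (\<forall>v\<in>V. 0 \<le> \<mu> v) \<and> (\<Sum>v\<in>V. \<mu> v) = 1}"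

definition cross :: "nat \<Rightarrow> (nat \<Rightarrow> real) set" where
  "cross n = fconv (cross_vertices n)"

definition fseg :: "(nat \<Rightarrow> real) \<Rightarrow> (nat \<Rightarrow> real) \<Rightarrow> (nat \<Rightarrow> real) set" where
  "fseg u w = {(\<lambda>j. (1 - t) * u j + t * w j) | t. 0 \<le> t \<and> t \<le> 1}"

definition lfun :: "nat \<Rightarrow> (nat \<Rightarrow> real) \<Rightarrow> (nat \<Rightarrow> real) \<Rightarrow> real" where
  "lfun n c x = (\<Sum>i=1..n. c i * x i)"

definition monotone_path :: "nat \<Rightarrow> (nat \<Rightarrow> real) \<Rightarrow> (nat \<Rightarrow> real) list \<Rightarrow> bool" where
  "monotone_path n a vs \<longleftrightarrow>
     vs \<noteq> [] \<and> hd vs = negv (unitv n) \<and> last vs = unitv n \<and>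
     set vs \<subseteq> cross_vertices n \<and>
     (\<forall>j. j + 1 < length vs \<longrightarrow>
        vs ! j \<noteq> negv (vs ! (j + 1)) \<and> lfun n a (vs ! j) < lfun n a (vs ! (j + 1)))"

definition lower_point :: "(real \<times> real) set \<Rightarrow> real \<times> real \<Rightarrow> bool" where
  "lower_point Q p \<longleftrightarrow> p \<in> Q \<and> (\<forall>q\<in>Q. fst q = fst p \<longrightarrow> snd p \<le> snd q)"

definition lower_vertex :: "(real \<times> real) set \<Rightarrow> real \<times> real \<Rightarrow> bool" where
  "lower_vertex Q p \<longleftrightarrow> {p} face_of Q \<and> lower_point Q p"

definition lower_edge :: "(real \<times> real) set \<Rightarrow> (real \<times> real) set \<Rightarrow> bool" where
  "lower_edge Q E \<longleftrightarrow> E face_of Q \<and> aff_dim E = 1 \<and> (\<forall>p\<in>E. lower_point Q p)"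

definition coherent_path :: "nat \<Rightarrow> (nat \<Rightarrow> real) \<Rightarrow> (nat \<Rightarrow> real) list \<Rightarrow> bool" where
  "coherent_path n a vs \<longleftrightarrow> monotone_path n a vs \<and>
     (\<exists>b :: nat \<Rightarrow> real.
        let \<pi> = (\<lambda>x. (lfun n a x, lfun n b x)); Q = \<pi> ` cross n in
        set (map \<pi> vs) = {p. lower_vertex Q p} \<and>
        sorted_wrt (\<lambda>p q. fst p < fst q) (map \<pi> vs) \<and>
        (\<forall>j. j + 1 < length vs \<longrightarrow>
           (\<exists>E. lower_edge Q E \<and> fseg (vs ! j) (vs ! (j + 1)) = {x \<in> cross n. \<pi> x \<in> E})))"

definition flip_rel :: "nat \<Rightarrow> (nat \<Rightarrow> real) \<Rightarrow> ((nat \<Rightarrow> real) list \<times> (nat \<Rightarrow> real) list) set" where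
  "flip_rel n a = {(p, q). monotone_path n a p \<and> monotone_path n a q \<and>
      ((\<exists>i x. q = take i p @ x # drop i p) \<or> (\<exists>i x. p = take i q @ x # drop i q))}"

definition extremal_path :: "nat \<Rightarrow> (nat \<Rightarrow> real) list" where
  "extremal_path n = map (\<lambda>i. negv (unitv i)) (rev [1..<n+1]) @ map unitv [2..<n+1]"

end

theory Submission
  imports Defs
begin



lemma unitv_eq[simp]: "unitv i = unitv j \<longleftrightarrow> i = j"
proof
  assume "unitv i = unitv j"
  then have "unitv i i = unitv j i" by simp
  then show "i = j" by (simp add: unitv_def split: if_splits)
qed simp

lemma negv_eq[simp]: "negv u = negv w \<longleftrightarrow> u = w"
proof
  assume h: "negv u = negv w"
  show "u = w"
  proof
    fix x
    from fun_cong[OF h, of x] show "u x = w x" by (simp add: negv_def)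
  qed
qed simp

lemma negv_negv[simp]: "negv (negv u) = u"
  unfolding negv_def by simp

lemma unitv_neq_negv1: "unitv i \<noteq> negv (unitv j)"
proof
  assume h: "unitv i = negv (unitv j)"
  have "unitv i i = negv (unitv j) i" using h by simp
  then show False by (simp add: unitv_def negv_def split: if_splits)
qed

lemma unitv_neq_negv[simp]: "unitv i \<noteq> negv (unitv j)" "negv (unitv j) \<noteq> unitv i"
  using unitv_neq_negv1 by metis+

lemma lfun_unitv: "1 \<le> i \<Longrightarrow> i \<le> n \<Longrightarrow> lfun n c (unitv i) = c i"
  unfolding lfun_def unitv_def by (simp add: if_distrib cong: if_cong)

lemma lfun_negv: "lfun n c (negv v) = - lfun n c v"
  unfolding lfun_def negv_def by (simp add: sum_negf)

lemma lfun_comb: "lfun n c (\<lambda>j. r * u j + s * w j) = r * lfun n c u + s * lfun n c w"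
  unfolding lfun_def by (simp add: algebra_simps sum.distrib sum_distrib_left)

lemma finite_V[simp]: "finite (cross_vertices n)"
  unfolding cross_vertices_def by simp

lemma lfun_sum: "finite V \<Longrightarrow> lfun n c (\<lambda>j. \<Sum>v\<in>V. \<mu> v * v j) = (\<Sum>v\<in>V. \<mu> v * lfun n c v)"
proof -
  have "(\<Sum>i=1..n. c i * (\<Sum>v\<in>V. \<mu> v * v i)) = (\<Sum>i=1..n. \<Sum>v\<in>V. \<mu> v * (c i * v i))"
    by (simp add: sum_distrib_left mult.left_commute)
  also have "\<dots> = (\<Sum>v\<in>V. \<Sum>i=1..n. \<mu> v * (c i * v i))" by (rule sum.swap)
  also have "\<dots> = (\<Sum>v\<in>V. \<mu> v * (\<Sum>i=1..n. c i * v i))" by (simp add: sum_distrib_left)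
  finally show ?thesis unfolding lfun_def .
qed




lemma two_point_sum:
  assumes "finite V" "u \<in> V" "w \<in> V" "u \<noteq> w" "\<forall>v\<in>V. v \<noteq> u \<and> v \<noteq> w \<longrightarrow> h v = 0"
  shows "sum h V = h u + h w"
proof -
  have "sum h V = sum h {u,w}"
    using assms by (intro sum.mono_neutral_right) auto
  thus ?thesis using assms by simp
qed

lemma one_point_sum:
  assumes "finite V" "u \<in> V" "\<forall>v\<in>V. v \<noteq> u \<longrightarrow> h v = 0"
  shows "sum h V = h u"
proof -
  have "sum h V = sum h {u}"
    using assms by (intro sum.mono_neutral_right) auto
  thus ?thesis using assms by simp
qed

lemma cover_lemma:
  fixes xs :: "real list"
  assumes "length xs \<ge> 2" "hd xs \<le> x" "x \<le> last xs"
  shows "\<exists>j. Suc j < length xs \<and> xs ! j \<le> x \<and> x \<le> xs ! Suc j"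
  using assms
proof (induction xs)
  case Nil then show ?case by simp
next
  case (Cons y ys)
  then obtain z zs where ys: "ys = z # zs" by (cases ys) auto
  show ?case
  proof (cases "x \<le> z")
    case True then show ?thesis using Cons.prems ys by (intro exI[of _ 0]) auto
  next
    case False
    show ?thesis
    proof (cases zs)
      case Nil then show ?thesis using Cons.prems ys False by simp
    next
      case (Cons z' zs')
      have "\<exists>j. Suc j < length ys \<and> ys ! j \<le> x \<and> x \<le> ys ! Suc j"
        using Cons.IH Cons.prems ys False Cons by auto
      then obtain j where "Suc j < length ys \<and> ys ! j \<le> x \<and> x \<le> ys ! Suc j" by blast
      then show ?thesis by (intro exI[of _ "Suc j"]) auto
    qed
  qed
qed

lemma fseg_in_cross:
  assumes "u \<in> cross_vertices n" "w \<in> cross_vertices n" "u \<noteq> w"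
  shows "fseg u w \<subseteq> cross n"
proof
  fix x assume "x \<in> fseg u w"
  then obtain t where t: "0 \<le> t" "t \<le> 1" "x = (\<lambda>j. (1 - t) * u j + t * w j)"
    unfolding fseg_def by blast
  define \<mu> where "\<mu> = (\<lambda>v. if v = u then 1 - t else if v = w then t else 0)"
  have "(\<lambda>j. \<Sum>v\<in>cross_vertices n. \<mu> v * v j) = x"
  proof
    fix j
    have "(\<Sum>v\<in>cross_vertices n. \<mu> v * v j) = \<mu> u * u j + \<mu> w * w j"
      using assms by (intro two_point_sum) (auto simp: \<mu>_def)
    then show "(\<Sum>v\<in>cross_vertices n. \<mu> v * v j) = x j" using t assms by (simp add: \<mu>_def)
  qed
  moreover have "(\<Sum>v\<in>cross_vertices n. \<mu> v) = 1"
    using assms by (subst two_point_sum[of _ u w]) (auto simp: \<mu>_def)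
  moreover have "\<forall>v\<in>cross_vertices n. 0 \<le> \<mu> v" using t by (auto simp: \<mu>_def)
  ultimately show "x \<in> cross n" unfolding cross_def fconv_def by blast
qed

lemma vertex_in_cross:
  assumes "u \<in> cross_vertices n"
  shows "u \<in> cross n"
proof -
  define \<mu> where "\<mu> = (\<lambda>v. if v = u then (1::real) else 0)"
  have "(\<lambda>j. \<Sum>v\<in>cross_vertices n. \<mu> v * v j) = u"
  proof
    fix j
    show "(\<Sum>v\<in>cross_vertices n. \<mu> v * v j) = u j"
      using assms by (subst one_point_sum[of _ u]) (auto simp: \<mu>_def)
  qed
  moreover have "(\<Sum>v\<in>cross_vertices n. \<mu> v) = 1"
    using assms by (subst one_point_sum[of _ u]) (auto simp: \<mu>_def)
  moreover have "\<forall>v\<in>cross_vertices n. 0 \<le> \<mu> v" by (auto simp: \<mu>_def)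
  ultimately show ?thesis unfolding cross_def fconv_def by blast
qed

lemma Q_eq:
  "(\<lambda>x. (lfun n c x, lfun n d x)) ` cross n =
   {((\<Sum>v\<in>cross_vertices n. \<mu> v * lfun n c v), (\<Sum>v\<in>cross_vertices n. \<mu> v * lfun n d v)) | \<mu>.
      (\<forall>v\<in>cross_vertices n. 0 \<le> \<mu> v) \<and> (\<Sum>v\<in>cross_vertices n. \<mu> v) = 1}"
  (is "?L = ?R")
proof
  show "?L \<subseteq> ?R"
  proof
    fix z assume "z \<in> ?L"
    then obtain x where x: "x \<in> cross n" "z = (lfun n c x, lfun n d x)" by blast
    then obtain \<mu> where m: "x = (\<lambda>j. \<Sum>v\<in>cross_vertices n. \<mu> v * v j)" "\<forall>v\<in>cross_vertices n. 0 \<le> \<mu> v"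
      "(\<Sum>v\<in>cross_vertices n. \<mu> v) = 1"
      unfolding cross_def fconv_def by blast
    have "z = ((\<Sum>v\<in>cross_vertices n. \<mu> v * lfun n c v), (\<Sum>v\<in>cross_vertices n. \<mu> v * lfun n d v))"
      using x(2) m(1) by (simp add: lfun_sum)
    then show "z \<in> ?R" using m by blast
  qed
  show "?R \<subseteq> ?L"
  proof
    fix z assume "z \<in> ?R"
    then obtain \<mu> where m: "z = ((\<Sum>v\<in>cross_vertices n. \<mu> v * lfun n c v), (\<Sum>v\<in>cross_vertices n. \<mu> v * lfun n d v))"
      "\<forall>v\<in>cross_vertices n. 0 \<le> \<mu> v" "(\<Sum>v\<in>cross_vertices n. \<mu> v) = 1" by blast
    define x where "x = (\<lambda>j. \<Sum>v\<in>cross_vertices n. \<mu> v * v j)"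
    have "x \<in> cross n" unfolding cross_def fconv_def x_def using m by blast
    moreover have "z = (lfun n c x, lfun n d x)" using m(1) by (simp add: x_def lfun_sum)
    ultimately show "z \<in> ?L" by blast
  qed
qed

lemma convex_Qform:
  fixes f g :: "'a \<Rightarrow> real"
  shows "convex {((\<Sum>v\<in>V. \<mu> v * f v), (\<Sum>v\<in>V. \<mu> v * g v)) | \<mu>.
      (\<forall>v\<in>V. 0 \<le> \<mu> v) \<and> (\<Sum>v\<in>V. \<mu> v) = 1}"
proof (rule convexI)
  fix x y :: "real \<times> real" and s t :: real
  assume x: "x \<in> {((\<Sum>v\<in>V. \<mu> v * f v), (\<Sum>v\<in>V. \<mu> v * g v)) | \<mu>.
      (\<forall>v\<in>V. 0 \<le> \<mu> v) \<and> (\<Sum>v\<in>V. \<mu> v) = 1}"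
    and y: "y \<in> {((\<Sum>v\<in>V. \<mu> v * f v), (\<Sum>v\<in>V. \<mu> v * g v)) | \<mu>.
      (\<forall>v\<in>V. 0 \<le> \<mu> v) \<and> (\<Sum>v\<in>V. \<mu> v) = 1}"
    and st: "0 \<le> s" "0 \<le> t" "s + t = 1"
  obtain \<mu>1 where m1: "x = ((\<Sum>v\<in>V. \<mu>1 v * f v), (\<Sum>v\<in>V. \<mu>1 v * g v))" "\<forall>v\<in>V. 0 \<le> \<mu>1 v" "(\<Sum>v\<in>V. \<mu>1 v) = 1"
    using x by blast
  obtain \<mu>2 where m2: "y = ((\<Sum>v\<in>V. \<mu>2 v * f v), (\<Sum>v\<in>V. \<mu>2 v * g v))" "\<forall>v\<in>V. 0 \<le> \<mu>2 v" "(\<Sum>v\<in>V. \<mu>2 v) = 1"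
    using y by blast
  define \<mu> where "\<mu> = (\<lambda>v. s * \<mu>1 v + t * \<mu>2 v)"
  have F: "(\<Sum>v\<in>V. \<mu> v * h v) = s * (\<Sum>v\<in>V. \<mu>1 v * h v) + t * (\<Sum>v\<in>V. \<mu>2 v * h v)" for h :: "'a \<Rightarrow> real"
    by (simp add: \<mu>_def sum.distrib sum_distrib_left distrib_right mult.assoc)
  have "s *\<^sub>R x + t *\<^sub>R y = ((\<Sum>v\<in>V. \<mu> v * f v), (\<Sum>v\<in>V. \<mu> v * g v))"
    by (simp only: F m1(1) m2(1) scaleR_Pair plus_prod_def fst_conv snd_conv real_scaleR_def)
  moreover have "\<forall>v\<in>V. 0 \<le> \<mu> v" using m1 m2 st by (simp add: \<mu>_def)
  moreover have "(\<Sum>v\<in>V. \<mu> v) = 1"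
  proof -
    have "(\<Sum>v\<in>V. \<mu> v) = s * (\<Sum>v\<in>V. \<mu>1 v) + t * (\<Sum>v\<in>V. \<mu>2 v)"
      by (simp add: \<mu>_def sum.distrib sum_distrib_left)
    then show ?thesis using m1 m2 st by simp
  qed
  ultimately show "s *\<^sub>R x + t *\<^sub>R y \<in> {((\<Sum>v\<in>V. \<mu> v * f v), (\<Sum>v\<in>V. \<mu> v * g v)) | \<mu>.
      (\<forall>v\<in>V. 0 \<le> \<mu> v) \<and> (\<Sum>v\<in>V. \<mu> v) = 1}" by blast
qed

lemma convex_Q: "convex ((\<lambda>x. (lfun n c x, lfun n d x)) ` cross n)"
  unfolding Q_eq by (rule convex_Qform[where V="cross_vertices n" and f="lfun n c" and g="lfun n d"])

lemma V_cases:
  assumes "v \<in> cross_vertices n"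
  obtains i where "1 \<le> i" "i \<le> n" "v = unitv i" | i where "1 \<le> i" "i \<le> n" "v = negv (unitv i)"
  using assms unfolding cross_vertices_def by blast

lemma set_insert_list: "set (take i q @ x # drop i q) = insert x (set q)"
proof -
  have "set (take i q) \<union> set (drop i q) = set q" by (metis append_take_drop_id set_append)
  then show ?thesis by auto
qed




definition pairs :: "nat \<Rightarrow> (nat \<Rightarrow> real) list \<Rightarrow> nat set" where
  "pairs n vs = {i \<in> {1..<n}. unitv i \<in> set vs \<and> negv (unitv i) \<in> set vs}"

lemma finite_pairs[simp]: "finite (pairs n vs)"
  unfolding pairs_def by simp

lemma card_idx_le1: "card (X \<inter> {i. unitv i = x \<or> negv (unitv i) = x}) \<le> 1"
proof (cases "\<exists>i. unitv i = x \<or> negv (unitv i) = x")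
  case True
  then obtain i where i: "unitv i = x \<or> negv (unitv i) = x" by blast
  have "X \<inter> {i. unitv i = x \<or> negv (unitv i) = x} \<subseteq> {i}"
    using i by auto
  then have "card (X \<inter> {i. unitv i = x \<or> negv (unitv i) = x}) \<le> card {i}"
    by (intro card_mono) auto
  then show ?thesis by simp
next
  case False
  then show ?thesis by simp
qed

lemma pairs_insert: "pairs n (take i q @ x # drop i q) \<subseteq> pairs n q \<union> {i. unitv i = x \<or> negv (unitv i) = x}"
  unfolding pairs_def set_insert_list by auto

lemma pairs_insert2: "pairs n q \<subseteq> pairs n (take i q @ x # drop i q)"
  unfolding pairs_def set_insert_list by auto

lemma flip_step: "(p, q) \<in> flip_rel n a \<Longrightarrow> card (pairs n p) \<le> card (pairs n q) + 1"
proof -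
  assume "(p, q) \<in> flip_rel n a"
  then have "(\<exists>i x. q = take i p @ x # drop i p) \<or> (\<exists>i x. p = take i q @ x # drop i q)"
    unfolding flip_rel_def by blast
  then show ?thesis
  proof
    assume "\<exists>i x. q = take i p @ x # drop i p"
    then obtain i x where "q = take i p @ x # drop i p" by blast
    then have "pairs n p \<subseteq> pairs n q" using pairs_insert2 by blast
    then have "card (pairs n p) \<le> card (pairs n q)" by (rule card_mono[OF finite_pairs])
    then show ?thesis by simp
  next
    assume "\<exists>i x. p = take i q @ x # drop i q"
    then obtain i x where px: "p = take i q @ x # drop i q" by blast
    define S where "S = {i. unitv i = x \<or> negv (unitv i) = x}"
    have "pairs n p \<subseteq> pairs n q \<union> (pairs n p \<inter> S)"
      using px pairs_insert unfolding S_def by blast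
    then have "card (pairs n p) \<le> card (pairs n q \<union> (pairs n p \<inter> S))"
      by (intro card_mono) auto
    also have "\<dots> \<le> card (pairs n q) + card (pairs n p \<inter> S)"
      by (rule card_Un_le)
    finally show ?thesis using card_idx_le1[of "pairs n p" x] unfolding S_def by linarith
  qed
qed

lemma flip_relpow: "(p, q) \<in> (flip_rel n a) ^^ k \<Longrightarrow> card (pairs n p) \<le> card (pairs n q) + k"
proof (induction k arbitrary: q)
  case 0 then show ?case by simp
next
  case (Suc k)
  from Suc.prems obtain y where "(p, y) \<in> (flip_rel n a) ^^ k" "(y, q) \<in> flip_rel n a"
    by (rule relpow_Suc_E)
  then show ?case using Suc.IH[of y] flip_step[of y q n a] by simp
qed

definition mrel :: "nat \<Rightarrow> (nat \<Rightarrow> real) \<Rightarrow> (nat \<Rightarrow> real) \<Rightarrow> (nat \<Rightarrow> real) \<Rightarrow> bool" where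
  "mrel n a u w \<longleftrightarrow> u \<noteq> negv w \<and> lfun n a u < lfun n a w"

lemma mp_iff: "monotone_path n a vs \<longleftrightarrow>
     vs \<noteq> [] \<and> hd vs = negv (unitv n) \<and> last vs = unitv n \<and>
     set vs \<subseteq> cross_vertices n \<and> successively (mrel n a) vs"
  unfolding monotone_path_def successively_conv_nth mrel_def by auto

lemma mp_sorted: "monotone_path n a vs \<Longrightarrow> sorted_wrt (\<lambda>u w. lfun n a u < lfun n a w) vs"
proof -
  assume "monotone_path n a vs"
  then have "successively (mrel n a) vs" by (simp add: mp_iff)
  then have "successively (\<lambda>u w. lfun n a u < lfun n a w) vs"
    by (rule successively_mono) (auto simp: mrel_def)
  moreover have "transp (\<lambda>u w. lfun n a u < lfun n a (w::nat\<Rightarrow>real))" by (auto simp: transp_def)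
  ultimately show ?thesis using successively_conv_sorted_wrt by blast
qed

lemma mp_distinct: "monotone_path n a vs \<Longrightarrow> distinct vs"
proof -
  assume "monotone_path n a vs"
  then have "sorted_wrt (<) (map (lfun n a) vs)" using mp_sorted by (simp add: sorted_wrt_map)
  then have "distinct (map (lfun n a) vs)" by (simp add: strict_sorted_iff)
  then show ?thesis by (simp add: distinct_map)
qed

lemma mp_len: "monotone_path n a vs \<Longrightarrow> 2 \<le> length vs"
proof (rule ccontr)
  assume m: "monotone_path n a vs" and l: "\<not> 2 \<le> length vs"
  have ne: "vs \<noteq> []" using m by (simp add: monotone_path_def)
  then have "length vs \<noteq> 0" by simp
  then have "length vs = 1" using l by linarith
  then obtain x where "vs = [x]" by (metis One_nat_def length_0_conv length_Suc_conv)
  then have "hd vs = last vs" by simp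
  then show False using m unfolding monotone_path_def by (metis unitv_neq_negv(1))
qed

lemma mp_hd_in: "monotone_path n a vs \<Longrightarrow> negv (unitv n) \<in> set vs"
  unfolding monotone_path_def by (metis hd_in_set)

lemma mp_last_in: "monotone_path n a vs \<Longrightarrow> unitv n \<in> set vs"
  unfolding monotone_path_def by (metis last_in_set)

lemma mp_V: "monotone_path n a vs \<Longrightarrow> v \<in> set vs \<Longrightarrow> v \<in> cross_vertices n"
  unfolding monotone_path_def by blast

lemma succ_upt: "(\<And>i. m \<le> i \<Longrightarrow> Suc i < k \<Longrightarrow> P i (Suc i)) \<Longrightarrow> successively P [m..<k]"
  unfolding successively_conv_nth by (simp add: add.commute)

locale cpx =
  fixes n :: nat and a :: "nat \<Rightarrow> real"
  assumes n3: "n \<ge> 3" and a1: "0 < a 1" and ainc: "\<forall>i. 1 \<le> i \<and> i < n \<longrightarrow> a i < a (i + 1)"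
begin

lemma a_mono: "1 \<le> i \<Longrightarrow> i < j \<Longrightarrow> j \<le> n \<Longrightarrow> a i < a j"
proof (induction j)
  case 0 thus ?case by simp
next
  case (Suc j)
  show ?case
  proof (cases "i = j")
    case True thus ?thesis using ainc Suc.prems by auto
  next
    case False
    then have "a i < a j" using Suc by auto
    moreover have "a j < a (Suc j)" using ainc Suc.prems False by auto
    ultimately show ?thesis by simp
  qed
qed

lemma a_step: "1 \<le> i \<Longrightarrow> i < n \<Longrightarrow> a i < a (Suc i)"
  using ainc by simp

lemma a_pos: "1 \<le> i \<Longrightarrow> i \<le> n \<Longrightarrow> 0 < a i"
  using a1 a_mono[of 1 i] by (cases "i = 1") auto

lemma a_ge1: "1 \<le> i \<Longrightarrow> i \<le> n \<Longrightarrow> a 1 \<le> a i"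
  using a_mono[of 1 i] by (cases "i = 1") auto

lemma a_le_n: "1 \<le> i \<Longrightarrow> i \<le> n \<Longrightarrow> a i \<le> a n"
  using a_mono[of i n] by (cases "i = n") auto

lemma a_inj: "1 \<le> i \<Longrightarrow> i \<le> n \<Longrightarrow> 1 \<le> j \<Longrightarrow> j \<le> n \<Longrightarrow> a i = a j \<Longrightarrow> i = j"
  using a_mono[of i j] a_mono[of j i] by (metis less_irrefl nat_neq_iff)

lemma phi_inj:
  assumes "u \<in> cross_vertices n" "w \<in> cross_vertices n" "lfun n a u = lfun n a w"
  shows "u = w"
proof -
  from assms(1) show ?thesis
  proof (cases rule: V_cases)
    case (1 i)
    from assms(2) show ?thesis
    proof (cases rule: V_cases)
      case (1 j) then show ?thesis using \<open>u = unitv i\<close> \<open>1 \<le> i\<close> \<open>i \<le> n\<close> assms(3) a_inj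
        by (auto simp: lfun_unitv)
    next
      case (2 j) then show ?thesis using \<open>u = unitv i\<close> \<open>1 \<le> i\<close> \<open>i \<le> n\<close> assms(3) a_pos[of i] a_pos[of j]
        by (auto simp: lfun_unitv lfun_negv)
    qed
  next
    case (2 i)
    from assms(2) show ?thesis
    proof (cases rule: V_cases)
      case (1 j) then show ?thesis using \<open>u = negv (unitv i)\<close> \<open>1 \<le> i\<close> \<open>i \<le> n\<close> assms(3) a_pos[of i] a_pos[of j]
        by (auto simp: lfun_unitv lfun_negv)
    next
      case (2 j) then show ?thesis using \<open>u = negv (unitv i)\<close> \<open>1 \<le> i\<close> \<open>i \<le> n\<close> assms(3) a_inj
        by (auto simp: lfun_unitv lfun_negv)
    qed
  qed
qed

lemma phi_abs: "v \<in> cross_vertices n \<Longrightarrow> a 1 \<le> \<bar>lfun n a v\<bar> \<and> \<bar>lfun n a v\<bar> \<le> a n"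
proof (erule V_cases)
  fix i assume i: "1 \<le> i" "i \<le> n" "v = unitv i"
  then show ?thesis using a_ge1[OF i(1,2)] a_le_n[OF i(1,2)] a_pos[OF i(1,2)] by (simp add: lfun_unitv)
next
  fix i assume i: "1 \<le> i" "i \<le> n" "v = negv (unitv i)"
  then show ?thesis using a_ge1[OF i(1,2)] a_le_n[OF i(1,2)] a_pos[OF i(1,2)] by (simp add: lfun_unitv lfun_negv)
qed

lemma phi_abs_lt: "v \<in> cross_vertices n \<Longrightarrow> v \<noteq> unitv n \<Longrightarrow> v \<noteq> negv (unitv n) \<Longrightarrow> \<bar>lfun n a v\<bar> < a n"
  by (erule V_cases) (auto simp: lfun_unitv lfun_negv a_mono a_pos abs_of_pos)

lemma phi_e: "1 \<le> i \<Longrightarrow> i \<le> n \<Longrightarrow> lfun n a (unitv i) = a i" by (simp add: lfun_unitv)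
lemma phi_ne: "1 \<le> i \<Longrightarrow> i \<le> n \<Longrightarrow> lfun n a (negv (unitv i)) = - a i" by (simp add: lfun_unitv lfun_negv)

lemma sorted_split:
  assumes "monotone_path n a p" "p = xs @ m # ys"
  shows "\<forall>x\<in>set xs. lfun n a x < lfun n a m" "\<forall>y\<in>set ys. lfun n a m < lfun n a y"
    "sorted_wrt (\<lambda>u w. lfun n a u < lfun n a w) ys"
  using mp_sorted[OF assms(1)] assms(2) by (auto simp: sorted_wrt_append)

lemma pairs_le: "monotone_path n a p \<Longrightarrow> pairs n p \<subseteq> {2..<n}"
proof
  fix i assume mp: "monotone_path n a p" and i: "i \<in> pairs n p"
  have "i \<noteq> 1"
  proof
    assume "i = 1"
    then have in1: "unitv 1 \<in> set p" "negv (unitv 1) \<in> set p" using i unfolding pairs_def by auto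
    obtain xs ys where p: "p = xs @ negv (unitv 1) # ys" using in1 split_list by metis
    note ss = sorted_split[OF mp p]
    have n1: "1 \<le> n" using n3 by simp
    have "unitv 1 \<notin> set xs" using ss(1) phi_e[of 1] phi_ne[of 1] a1 n1 by force
    then have "unitv 1 \<in> set ys" using in1 p by auto
    then obtain y ys' where ys: "ys = y # ys'" by (cases ys) auto
    show False
    proof (cases "y = unitv 1")
      case True
      have "successively (mrel n a) p" using mp by (simp add: mp_iff)
      then have "mrel n a (negv (unitv 1)) y" unfolding p ys by (simp add: successively_append_iff)
      then show False using True by (simp add: mrel_def)
    next
      case False
      then have "unitv 1 \<in> set ys'" using \<open>unitv 1 \<in> set ys\<close> ys by auto
      then have "lfun n a y < a 1" using ss(3) ys phi_e[of 1] n1 by auto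
      moreover have "- a 1 < lfun n a y" using ss(2) ys phi_ne[of 1] n1 by auto
      moreover have "y \<in> cross_vertices n" using mp p ys by (auto simp: mp_iff)
      ultimately show False using phi_abs[of y] by auto
    qed
  qed
  then show "i \<in> {2..<n}" using i unfolding pairs_def by auto
qed

lemma card_pairs_le: "monotone_path n a p \<Longrightarrow> card (pairs n p) \<le> n - 2"
  using card_mono[OF _ pairs_le, of p] by simp

lemma delete_step:
  assumes mp: "monotone_path n a p" and i: "i \<in> pairs n p"
  shows "\<exists>p'. monotone_path n a p' \<and> pairs n p' = pairs n p - {i} \<and> (p, p') \<in> flip_rel n a"
proof -
  define m where "m = negv (unitv i)"
  have i1: "1 \<le> i" "i < n" and ine: "unitv i \<in> set p" "m \<in> set p" using i unfolding pairs_def m_def by auto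
  obtain xs ys where p: "p = xs @ m # ys" using ine split_list by metis
  note ss = sorted_split[OF mp p]
  have dist: "distinct p" by (rule mp_distinct[OF mp])
  have ms: "m \<notin> set xs" "m \<notin> set ys" using dist p by auto
  define p' where "p' = xs @ ys"
  have setp': "set p' = set p - {m}" using ms p by (auto simp: p'_def)
  have xsne: "xs \<noteq> []"
  proof
    assume "xs = []"
    then have "m = negv (unitv n)" using mp p by (simp add: mp_iff)
    then show False using i1 by (simp add: m_def)
  qed
  have ysne: "ys \<noteq> []"
  proof
    assume "ys = []"
    then have "m = unitv n" using mp p by (simp add: mp_iff)
    then show False by (simp add: m_def)
  qed
  have succ: "successively (mrel n a) p" using mp by (simp add: mp_iff)
  then have s1: "successively (mrel n a) xs" and s2: "successively (mrel n a) ys"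
    unfolding p by (auto simp: successively_append_iff successively_Cons)
  have ph_lx: "lfun n a (last xs) < - a i" using ss(1) xsne phi_ne[of i] i1 by (auto simp: m_def)
  have "unitv i \<notin> set xs" using ss(1) phi_ne[of i] phi_e[of i] a_pos[of i] i1 by (force simp: m_def)
  then have eiys: "unitv i \<in> set ys" using ine p by (auto simp: m_def)
  obtain y ys' where ys: "ys = y # ys'" using ysne by (cases ys) auto
  have "lfun n a y \<le> a i"
  proof (cases "y = unitv i")
    case True then show ?thesis using phi_e[of i] i1 by simp
  next
    case False then show ?thesis using eiys ys ss(3) phi_e[of i] i1 by force
  qed
  have cross: "mrel n a (last xs) (hd ys)"
  proof -
    have "lfun n a (hd ys) > lfun n a m" using ss(2) ysne by auto
    moreover have "last xs \<noteq> negv (hd ys)"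
    proof
      assume "last xs = negv (hd ys)"
      then have "lfun n a (last xs) = - lfun n a y" using ys by (simp add: lfun_negv)
      then show False using ph_lx \<open>lfun n a y \<le> a i\<close> by linarith
    qed
    moreover have "lfun n a (last xs) < lfun n a m" using ss(1) xsne by auto
    ultimately show ?thesis unfolding mrel_def by linarith
  qed
  have mp': "monotone_path n a p'"
    unfolding mp_iff
  proof (intro conjI)
    show "p' \<noteq> []" using xsne by (simp add: p'_def)
    show "hd p' = negv (unitv n)" using mp p xsne by (simp add: mp_iff p'_def)
    show "last p' = unitv n" using mp p ysne by (simp add: mp_iff p'_def)
    show "set p' \<subseteq> cross_vertices n" using mp setp' by (auto simp: mp_iff)
    show "successively (mrel n a) p'" unfolding p'_def using s1 s2 cross
      by (simp add: successively_append_iff)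
  qed
  have "pairs n p' = pairs n p - {i}"
    unfolding pairs_def setp' m_def by auto
  moreover have "(p, p') \<in> flip_rel n a"
    unfolding flip_rel_def using mp mp'
    by (auto intro!: exI[of _ "length xs"] exI[of _ m] simp: p p'_def)
  ultimately show ?thesis using mp' by blast
qed

lemma extremal_set: "set (extremal_path n) = (\<lambda>i. negv (unitv i)) ` {1..n} \<union> unitv ` {2..n}"
  unfolding extremal_path_def by auto

lemma extremal_pairs: "pairs n (extremal_path n) = {2..<n}"
  unfolding pairs_def extremal_set by auto

lemma extremal_mp: "monotone_path n a (extremal_path n)"
  unfolding mp_iff
proof (intro conjI)
  have r: "rev [1..<n+1] = n # rev [1..<n]" using n3 by simp
  have "[2..<n+1] = 2 # [3..<n+1]" using n3 by (simp add: upt_rec)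
  then have l2: "map unitv [2..<n+1] \<noteq> []" by simp
  show "extremal_path n \<noteq> []" unfolding extremal_path_def r by simp
  show "hd (extremal_path n) = negv (unitv n)" unfolding extremal_path_def r by simp
  show "last (extremal_path n) = unitv n" unfolding extremal_path_def using l2 n3 by simp
  show "set (extremal_path n) \<subseteq> cross_vertices n"
    unfolding extremal_set cross_vertices_def by auto
  have A: "successively (mrel n a) (map (\<lambda>i. negv (unitv i)) (rev [1..<n+1]))"
    unfolding successively_map successively_rev
    by (rule succ_upt) (auto simp: mrel_def phi_ne a_step)
  have B: "successively (mrel n a) (map unitv [2..<n+1])"
    unfolding successively_map
    by (rule succ_upt) (auto simp: mrel_def phi_e a_step)
  have C: "mrel n a (negv (unitv 1)) (unitv 2)"
    using n3 a_pos[of 1] a_pos[of 2] by (auto simp: mrel_def phi_e phi_ne)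
  have hl: "last (map (\<lambda>i. negv (unitv i)) (rev [1..<n+1])) = negv (unitv 1)"
    using n3 by (simp add: last_map last_rev hd_upt)
  have hh: "hd (map unitv [2..<n+1]) = unitv 2" using n3 by (simp add: hd_map hd_upt)
  show "successively (mrel n a) (extremal_path n)"
    unfolding extremal_path_def successively_append_iff using A B C hl hh by simp
qed

end



context cpx begin

definition bq :: "(nat \<Rightarrow> real) list \<Rightarrow> nat \<Rightarrow> real" where
  "bq q i = (if unitv i \<in> set q then (a i)^2 - (a n)^2
             else if negv (unitv i) \<in> set q then (a n)^2 - (a i)^2 else 0)"

lemma an_pos: "0 < a n" using a_pos[of n] n3 by simp

lemma F1:
  assumes mq: "monotone_path n a q" and np: "pairs n q = {}" and v: "v \<in> set q"
  shows "lfun n (bq q) v = (lfun n a v)^2 - (a n)^2"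
proof -
  have vV: "v \<in> cross_vertices n" using mp_V[OF mq v] .
  then show ?thesis
  proof (cases rule: V_cases)
    case (1 i) then show ?thesis using v by (simp add: lfun_unitv bq_def)
  next
    case (2 i)
    show ?thesis
    proof (cases "unitv i \<in> set q")
      case True
      have "i = n"
      proof (rule ccontr)
        assume "i \<noteq> n"
        then have "i \<in> pairs n q" using 2 True v unfolding pairs_def by auto
        then show False using np by simp
      qed
      then show ?thesis using 2 True by (simp add: lfun_unitv lfun_negv bq_def)
    next
      case False
      then show ?thesis using 2 v by (simp add: lfun_unitv lfun_negv bq_def)
    qed
  qed
qed

lemma sq_lt: "\<bar>x::real\<bar> < y \<Longrightarrow> x^2 < y^2"
  by (metis abs_ge_zero abs_power2 power2_abs power_strict_mono zero_less_numeral)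

lemma sq_le: "\<bar>x::real\<bar> \<le> y \<Longrightarrow> x^2 \<le> y^2"
  by (metis abs_ge_zero power2_abs power_mono)

lemma F3: "v \<in> cross_vertices n \<Longrightarrow> (lfun n a v)^2 \<le> (a n)^2"
  using phi_abs[of v] sq_le by blast

lemma F2:
  assumes mq: "monotone_path n a q" and vV: "v \<in> cross_vertices n" and v: "v \<notin> set q"
  shows "0 \<le> lfun n (bq q) v \<and> (lfun n a v)^2 < (a n)^2"
proof
  have "v \<noteq> unitv n" "v \<noteq> negv (unitv n)" using v mp_hd_in[OF mq] mp_last_in[OF mq] by auto
  then show "(lfun n a v)^2 < (a n)^2" using phi_abs_lt[OF vV] sq_lt by blast
  have ai: "1 \<le> i \<Longrightarrow> i \<le> n \<Longrightarrow> (a i)^2 \<le> (a n)^2" for i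
    using sq_le[of "a i" "a n"] a_le_n[of i] a_pos[of i] by simp
  from vV show "0 \<le> lfun n (bq q) v"
  proof (cases rule: V_cases)
    case (1 i) then show ?thesis using v ai[of i] by (simp add: lfun_unitv bq_def)
  next
    case (2 i) then show ?thesis using v ai[of i] by (simp add: lfun_unitv lfun_negv bq_def)
  qed
qed

definition Dv :: "(nat \<Rightarrow> real) list \<Rightarrow> real \<Rightarrow> real \<Rightarrow> (nat \<Rightarrow> real) \<Rightarrow> real" where
  "Dv q s t v = lfun n (bq q) v - (s + t) * lfun n a v + s * t + (a n)^2"

lemma chord_neg:
  fixes s t x A :: real
  assumes "s < x" "x < t" "s^2 \<le> A" "t^2 \<le> A" "s^2 < A \<or> t^2 < A"
  shows "(s + t) * x - s * t - A < 0"
proof -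
  have eq: "(t - s) * ((s + t) * x - s * t - A) = (t - x) * (s^2 - A) + (x - s) * (t^2 - A)"
    by (simp add: algebra_simps power2_eq_square)
  have "(t - x) * (s^2 - A) + (x - s) * (t^2 - A) < 0"
  proof (cases "s^2 < A")
    case True
    have "(t - x) * (s^2 - A) < 0" using True assms by (intro mult_pos_neg) auto
    moreover have "(x - s) * (t^2 - A) \<le> 0" using assms by (intro mult_nonneg_nonpos) auto
    ultimately show ?thesis by linarith
  next
    case False
    then have "t^2 < A" using assms by auto
    have "(x - s) * (t^2 - A) < 0" using \<open>t^2 < A\<close> assms by (intro mult_pos_neg) auto
    moreover have "(t - x) * (s^2 - A) \<le> 0" using assms by (intro mult_nonneg_nonpos) auto
    ultimately show ?thesis by linarith
  qed
  then have "(t - s) * ((s + t) * x - s * t - A) < 0" using eq by simp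
  moreover have "t - s > 0" using assms by simp
  ultimately show ?thesis by (simp add: mult_less_0_iff)
qed

lemma KEY:
  assumes mq: "monotone_path n a q" and np: "pairs n q = {}"
    and u: "u \<in> set q" and w: "w \<in> set q"
    and st: "lfun n a u \<le> lfun n a w"
    and gap: "\<forall>v\<in>set q. \<not> (lfun n a u < lfun n a v \<and> lfun n a v < lfun n a w)"
    and np2: "\<not> (u = negv (unitv n) \<and> w = unitv n)"
    and vV: "v \<in> cross_vertices n"
  shows "0 \<le> Dv q (lfun n a u) (lfun n a w) v \<and>
         (Dv q (lfun n a u) (lfun n a w) v = 0 \<longrightarrow> v = u \<or> v = w)"
proof -
  define s where "s = lfun n a u"
  define t where "t = lfun n a w"
  define x where "x = lfun n a v"
  define A where "A = (a n)^2"
  have uV: "u \<in> cross_vertices n" and wV: "w \<in> cross_vertices n" using mp_V[OF mq] u w by auto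
  show ?thesis
  proof (cases "v \<in> set q")
    case True
    have D: "Dv q s t v = (x - s) * (x - t)"
      unfolding Dv_def F1[OF mq np True] x_def by (simp add: algebra_simps power2_eq_square)
    have "x \<le> s \<or> t \<le> x" using gap True unfolding s_def t_def x_def by force
    then have "0 \<le> (x - s) * (x - t)"
      using st unfolding s_def t_def
      by (metis diff_ge_0_iff_ge mult_nonneg_nonneg mult_nonpos_nonpos diff_le_0_iff_le order.trans)
    moreover have "v = u \<or> v = w" if "(x - s) * (x - t) = 0"
    proof -
      have "x = s \<or> x = t" using that by simp
      then show ?thesis using phi_inj[OF vV uV] phi_inj[OF vV wV] unfolding x_def s_def t_def by blast
    qed
    ultimately show ?thesis using D unfolding s_def t_def by simp
  next
    case False
    note f2 = F2[OF mq vV False]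
    have "0 < Dv q s t v"
    proof (cases "x \<le> s \<or> t \<le> x")
      case True
      have "0 \<le> (x - s) * (x - t)"
        using True st unfolding s_def t_def
        by (metis diff_ge_0_iff_ge mult_nonneg_nonneg mult_nonpos_nonpos diff_le_0_iff_le order.trans)
      moreover have "Dv q s t v = lfun n (bq q) v - (x^2 - A) + (x - s) * (x - t)"
        unfolding Dv_def x_def A_def by (simp add: algebra_simps power2_eq_square)
      ultimately show ?thesis using f2 unfolding x_def A_def by linarith
    next
      case False
      then have sx: "s < x" "x < t" by auto
      have s2: "s^2 \<le> A" "t^2 \<le> A" using F3[OF uV] F3[OF wV] unfolding s_def t_def A_def by auto
      have s3: "s^2 < A \<or> t^2 < A"
      proof (rule ccontr)
        assume "\<not> (s^2 < A \<or> t^2 < A)"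
        then have "s^2 = (a n)^2" "t^2 = (a n)^2" using s2 unfolding A_def by auto
        then have "s = a n \<or> s = - a n" "t = a n \<or> t = - a n"
          by (auto simp: power2_eq_iff)
        then have "s = - a n" "t = a n" using sx an_pos by auto
        then have "u = negv (unitv n)" "w = unitv n"
          using phi_inj[OF uV, of "negv (unitv n)"] phi_inj[OF wV, of "unitv n"] n3
          unfolding s_def t_def by (auto simp: phi_e phi_ne cross_vertices_def)
        then show False using np2 by simp
      qed
      have "(s + t) * x - s * t - A < 0" by (rule chord_neg[OF sx s2 s3])
      then show ?thesis using f2 unfolding Dv_def x_def A_def by linarith
    qed
    then show ?thesis unfolding s_def t_def by simp
  qed
qed

end



lemma sum_lin3:
  fixes p f \<mu> :: "'a \<Rightarrow> real"
  shows "(\<Sum>v\<in>V. \<mu> v * (p v - m * f v + c)) = (\<Sum>v\<in>V. \<mu> v * p v) - m * (\<Sum>v\<in>V. \<mu> v * f v) + c * (\<Sum>v\<in>V. \<mu> v)"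
proof -
  have "(\<Sum>v\<in>V. \<mu> v * (p v - m * f v + c)) = (\<Sum>v\<in>V. \<mu> v * p v - m * (\<mu> v * f v) + c * \<mu> v)"
    by (rule sum.cong) (auto simp: algebra_simps)
  also have "\<dots> = (\<Sum>v\<in>V. \<mu> v * p v) - (\<Sum>v\<in>V. m * (\<mu> v * f v)) + (\<Sum>v\<in>V. c * \<mu> v)"
    by (simp only: sum.distrib sum_subtractf)
  also have "\<dots> = (\<Sum>v\<in>V. \<mu> v * p v) - m * (\<Sum>v\<in>V. \<mu> v * f v) + c * (\<Sum>v\<in>V. \<mu> v)"
    by (simp only: sum_distrib_left)
  finally show ?thesis .
qed

context cpx begin

definition pib :: "(nat \<Rightarrow> real) list \<Rightarrow> (nat \<Rightarrow> real) \<Rightarrow> real \<times> real" where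
  "pib q x = (lfun n a x, lfun n (bq q) x)"

definition Qb :: "(nat \<Rightarrow> real) list \<Rightarrow> (real \<times> real) set" where
  "Qb q = pib q ` cross n"

lemma Qb_rep:
  assumes "z \<in> Qb q"
  obtains \<mu> where "\<forall>v\<in>cross_vertices n. 0 \<le> \<mu> v" "(\<Sum>v\<in>cross_vertices n. \<mu> v) = 1"
    "z = ((\<Sum>v\<in>cross_vertices n. \<mu> v * lfun n a v), (\<Sum>v\<in>cross_vertices n. \<mu> v * lfun n (bq q) v))"
proof -
  have "z \<in> (\<lambda>x. (lfun n a x, lfun n (bq q) x)) ` cross n" using assms by (simp add: Qb_def pib_def)
  then show ?thesis unfolding Q_eq using that by blast
qed

lemma pib_comb: "pib q (\<lambda>j. (1 - r) * u j + r * w j) = (1 - r) *\<^sub>R pib q u + r *\<^sub>R pib q w"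
  by (simp add: pib_def lfun_comb)

lemma convex_Qb: "convex (Qb q)"
proof -
  have "Qb q = (\<lambda>x. (lfun n a x, lfun n (bq q) x)) ` cross n" by (simp add: Qb_def pib_def)
  then show ?thesis using convex_Q by simp
qed

lemma fseg_self: "fseg u u = {u}"
  unfolding fseg_def by (auto simp: algebra_simps intro!: exI[of _ 0])

lemma FACE:
  assumes mq: "monotone_path n a q" and np: "pairs n q = {}"
    and u: "u \<in> set q" and w: "w \<in> set q"
    and st: "lfun n a u \<le> lfun n a w"
    and gap: "\<forall>v\<in>set q. \<not> (lfun n a u < lfun n a v \<and> lfun n a v < lfun n a w)"
    and np2: "\<not> (u = negv (unitv n) \<and> w = unitv n)"
    and s_def: "s = lfun n a u" and t_def: "t = lfun n a w"
    and F_def: "F = {z \<in> Qb q. snd z - (s + t) * fst z = - (s * t) - (a n)^2}"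
  shows "\<forall>z\<in>Qb q. 0 \<le> snd z - (s + t) * fst z + s * t + (a n)^2"
    and "F face_of Qb q"
    and "\<forall>z\<in>F. lower_point (Qb q) z"
    and "F = closed_segment (pib q u) (pib q w)"
    and "{x \<in> cross n. pib q x \<in> F} = fseg u w"
proof -
  define A where "A = (a n)^2"
  have uV: "u \<in> cross_vertices n" and wV: "w \<in> cross_vertices n" using mp_V[OF mq] u w by auto
  have Dnn: "0 \<le> Dv q s t v" "Dv q s t v = 0 \<Longrightarrow> v = u \<or> v = w" if "v \<in> cross_vertices n" for v
    using KEY[OF mq np u w st gap np2 that] unfolding s_def t_def by auto
  have Dsum: "snd z - (s + t) * fst z + s * t + A = (\<Sum>v\<in>cross_vertices n. \<mu> v * Dv q s t v)"
    if "z = ((\<Sum>v\<in>cross_vertices n. \<mu> v * lfun n a v), (\<Sum>v\<in>cross_vertices n. \<mu> v * lfun n (bq q) v))"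
       "(\<Sum>v\<in>cross_vertices n. \<mu> v) = 1" for z \<mu>
  proof -
    have "(\<Sum>v\<in>cross_vertices n. \<mu> v * Dv q s t v) =
          (\<Sum>v\<in>cross_vertices n. \<mu> v * (lfun n (bq q) v - (s + t) * lfun n a v + (s * t + A)))"
      unfolding Dv_def A_def by (simp add: add.assoc)
    also have "\<dots> = snd z - (s + t) * fst z + (s * t + A)"
      unfolding sum_lin3 using that by simp
    finally show ?thesis by simp
  qed
  show E: "\<forall>z\<in>Qb q. 0 \<le> snd z - (s + t) * fst z + s * t + (a n)^2"
  proof
    fix z assume "z \<in> Qb q"
    then obtain \<mu> where m: "\<forall>v\<in>cross_vertices n. 0 \<le> \<mu> v" "(\<Sum>v\<in>cross_vertices n. \<mu> v) = 1"
      "z = ((\<Sum>v\<in>cross_vertices n. \<mu> v * lfun n a v), (\<Sum>v\<in>cross_vertices n. \<mu> v * lfun n (bq q) v))"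
      by (rule Qb_rep)
    have "0 \<le> (\<Sum>v\<in>cross_vertices n. \<mu> v * Dv q s t v)"
      using m(1) Dnn(1) by (intro sum_nonneg) auto
    then show "0 \<le> snd z - (s + t) * fst z + s * t + (a n)^2" using Dsum[OF m(3) m(2)] by (simp add: A_def)
  qed
  have Du: "lfun n (bq q) u - (s + t) * s = - (s * t) - A"
    using F1[OF mq np u] unfolding s_def A_def by (simp add: algebra_simps power2_eq_square)
  have Dw: "lfun n (bq q) w - (s + t) * t = - (s * t) - A"
    using F1[OF mq np w] unfolding t_def A_def by (simp add: algebra_simps power2_eq_square)
  have fseg_sub: "fseg u w \<subseteq> {x \<in> cross n. pib q x \<in> F}"
  proof
    fix x assume x: "x \<in> fseg u w"
    then obtain r where r: "0 \<le> r" "r \<le> 1" "x = (\<lambda>j. (1 - r) * u j + r * w j)"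
      unfolding fseg_def by blast
    have xc: "x \<in> cross n"
    proof (cases "u = w")
      case True
      then have "x = u" using r by (auto simp: algebra_simps)
      then show ?thesis using vertex_in_cross[OF uV] by simp
    next
      case False
      then show ?thesis using fseg_in_cross[OF uV wV False] x by blast
    qed
    have px: "pib q x = ((1 - r) * s + r * t, (1 - r) * lfun n (bq q) u + r * lfun n (bq q) w)"
      unfolding r(3) pib_def lfun_comb s_def t_def by simp
    have "snd (pib q x) - (s + t) * fst (pib q x) =
          (1 - r) * (lfun n (bq q) u - (s + t) * s) + r * (lfun n (bq q) w - (s + t) * t)"
      unfolding px by (simp add: algebra_simps)
    also have "\<dots> = - (s * t) - A" unfolding Du Dw by (simp add: algebra_simps)
    finally have "snd (pib q x) - (s + t) * fst (pib q x) = - (s * t) - (a n)^2" by (simp add: A_def)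
    moreover have "pib q x \<in> Qb q" using xc by (simp add: Qb_def)
    ultimately show "x \<in> {x \<in> cross n. pib q x \<in> F}" using xc unfolding F_def by blast
  qed
  have pre_sub: "x \<in> fseg u w" if x: "x \<in> cross n" "pib q x \<in> F" for x
  proof -
    obtain \<mu> where m: "x = (\<lambda>j. \<Sum>v\<in>cross_vertices n. \<mu> v * v j)" "\<forall>v\<in>cross_vertices n. 0 \<le> \<mu> v"
      "(\<Sum>v\<in>cross_vertices n. \<mu> v) = 1"
      using x(1) unfolding cross_def fconv_def by blast
    have pz: "pib q x = ((\<Sum>v\<in>cross_vertices n. \<mu> v * lfun n a v), (\<Sum>v\<in>cross_vertices n. \<mu> v * lfun n (bq q) v))"
      unfolding pib_def m(1) by (simp add: lfun_sum)
    have "snd (pib q x) - (s + t) * fst (pib q x) + s * t + A = 0"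
      using x(2) unfolding F_def A_def by simp
    then have "(\<Sum>v\<in>cross_vertices n. \<mu> v * Dv q s t v) = 0" using Dsum[OF pz m(3)] by simp
    then have "\<forall>v\<in>cross_vertices n. \<mu> v * Dv q s t v = 0"
      using m(2) Dnn(1) by (subst sum_nonneg_eq_0_iff[symmetric]) auto
    then have z: "\<mu> v = 0" if "v \<in> cross_vertices n" "v \<noteq> u" "v \<noteq> w" for v
      using Dnn(2)[OF that(1)] that by auto
    show ?thesis
    proof (cases "u = w")
      case True
      have mu1: "\<mu> u = 1" using m(3) z True by (subst (asm) one_point_sum[of _ u]) (auto simp: uV wV)
      have "x = u"
      proof
        fix j
        show "x j = u j" unfolding m(1) using z True mu1
          by (subst one_point_sum[of _ u]) (auto simp: uV wV)
      qed
      then show ?thesis using True by (simp add: fseg_self)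
    next
      case False
      have mus: "\<mu> u + \<mu> w = 1" using m(3) z False
        by (subst (asm) two_point_sum[of _ u w]) (auto simp: uV wV)
      have "x = (\<lambda>j. (1 - \<mu> w) * u j + \<mu> w * w j)"
      proof
        fix j
        have "x j = \<mu> u * u j + \<mu> w * w j" unfolding m(1) using z False
          by (subst two_point_sum[of _ u w]) (auto simp: uV wV)
        moreover have "1 - \<mu> w = \<mu> u" using mus by simp
        ultimately show "x j = (1 - \<mu> w) * u j + \<mu> w * w j" by simp
      qed
      moreover have "0 \<le> \<mu> w" "\<mu> w \<le> 1" using m(2) uV wV mus by auto
      ultimately show ?thesis unfolding fseg_def by blast
    qed
  qed
  show PRE: "{x \<in> cross n. pib q x \<in> F} = fseg u w"
    using fseg_sub pre_sub by blast
  have FQ: "F \<subseteq> Qb q" unfolding F_def by blast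
  have "F = pib q ` fseg u w"
  proof
    show "F \<subseteq> pib q ` fseg u w"
    proof
      fix z assume z: "z \<in> F"
      then obtain x where "x \<in> cross n" "z = pib q x" using FQ unfolding Qb_def by blast
      then show "z \<in> pib q ` fseg u w" using pre_sub z by blast
    qed
    show "pib q ` fseg u w \<subseteq> F" using fseg_sub by blast
  qed
  also have "pib q ` fseg u w = closed_segment (pib q u) (pib q w)"
  proof
    show "pib q ` fseg u w \<subseteq> closed_segment (pib q u) (pib q w)"
      unfolding fseg_def closed_segment_def by (auto simp: pib_comb simp del: scaleR_Pair)
    show "closed_segment (pib q u) (pib q w) \<subseteq> pib q ` fseg u w"
    proof
      fix z assume "z \<in> closed_segment (pib q u) (pib q w)"
      then obtain r where r: "0 \<le> r" "r \<le> 1" "z = (1 - r) *\<^sub>R pib q u + r *\<^sub>R pib q w"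
        unfolding closed_segment_def by blast
      have "z = pib q (\<lambda>j. (1 - r) * u j + r * w j)" using r(3) by (simp only: pib_comb)
      moreover have "(\<lambda>j. (1 - r) * u j + r * w j) \<in> fseg u w" using r unfolding fseg_def by blast
      ultimately show "z \<in> pib q ` fseg u w" by blast
    qed
  qed
  finally show "F = closed_segment (pib q u) (pib q w)" .
  have eqi: "(- (s + t), 1::real) \<bullet> z = snd z - (s + t) * fst z" for z :: "real \<times> real"
    by (simp add: inner_prod_def algebra_simps)
  have "F = Qb q \<inter> {z. (- (s + t), 1::real) \<bullet> z = - (s * t) - (a n)^2}"
    unfolding F_def eqi by blast
  moreover have "(Qb q \<inter> {z. (- (s + t), 1::real) \<bullet> z = - (s * t) - (a n)^2}) face_of Qb q"
  proof (rule face_of_Int_supporting_hyperplane_ge[OF convex_Qb])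
    fix z assume "z \<in> Qb q"
    then have "0 \<le> snd z - (s + t) * fst z + s * t + (a n)^2" using E by blast
    then show "- (s * t) - (a n)^2 \<le> (- (s + t), 1::real) \<bullet> z" unfolding eqi by linarith
  qed
  ultimately show "F face_of Qb q" by simp
  show "\<forall>z\<in>F. lower_point (Qb q) z"
  proof
    fix z assume z: "z \<in> F"
    show "lower_point (Qb q) z" unfolding lower_point_def
    proof (intro conjI ballI impI)
      show "z \<in> Qb q" using z FQ by blast
      fix y assume "y \<in> Qb q" "fst y = fst z"
      then show "snd z \<le> snd y" using E z unfolding F_def by force
    qed
  qed
qed

end



context cpx begin

lemma edge_prep:
  assumes mq: "monotone_path n a q" and j: "j + 1 < length q"
  shows "q ! j \<in> set q" "q ! (j+1) \<in> set q" "lfun n a (q ! j) < lfun n a (q ! (j+1))"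
    "\<forall>v\<in>set q. \<not> (lfun n a (q ! j) < lfun n a v \<and> lfun n a v < lfun n a (q ! (j+1)))"
    "\<not> (q ! j = negv (unitv n) \<and> q ! (j+1) = unitv n)"
proof -
  show "q ! j \<in> set q" "q ! (j+1) \<in> set q" using j by auto
  have succ: "successively (mrel n a) q" using mq by (simp add: mp_iff)
  have mr: "mrel n a (q ! j) (q ! Suc j)" using successively_nth[OF succ] j by simp
  then show "lfun n a (q ! j) < lfun n a (q ! (j+1))" by (simp add: mrel_def)
  show "\<not> (q ! j = negv (unitv n) \<and> q ! (j+1) = unitv n)" using mr by (auto simp: mrel_def)
  have srt: "sorted_wrt (\<lambda>u w. lfun n a u < lfun n a w) q" by (rule mp_sorted[OF mq])
  show "\<forall>v\<in>set q. \<not> (lfun n a (q ! j) < lfun n a v \<and> lfun n a v < lfun n a (q ! (j+1)))"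
  proof
    fix v assume "v \<in> set q"
    then obtain k where k: "k < length q" "v = q ! k" by (auto simp: in_set_conv_nth)
    show "\<not> (lfun n a (q ! j) < lfun n a v \<and> lfun n a v < lfun n a (q ! (j+1)))"
    proof (cases "k \<le> j")
      case True
      then have "lfun n a v \<le> lfun n a (q ! j)"
        using srt k j by (cases "k = j") (auto simp: sorted_wrt_iff_nth_less less_imp_le)
      then show ?thesis by simp
    next
      case False
      then have "lfun n a (q ! (j+1)) \<le> lfun n a v"
        using srt k j by (cases "k = j + 1") (auto simp: sorted_wrt_iff_nth_less less_imp_le)
      then show ?thesis by simp
    qed
  qed
qed

lemma nopairs_coherent:
  assumes mq: "monotone_path n a q" and np: "pairs n q = {}"
  shows "coherent_path n a q"
proof -
  have peq: "(\<lambda>x. (lfun n a x, lfun n (bq q) x)) = pib q" by (rule ext) (simp add: pib_def)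
  have len: "2 \<le> length q" by (rule mp_len[OF mq])
  have srt: "sorted_wrt (\<lambda>u w. lfun n a u < lfun n a w) q" by (rule mp_sorted[OF mq])
  have vert: "{pib q v} face_of Qb q \<and> lower_point (Qb q) (pib q v)" if v: "v \<in> set q" for v
  proof -
    define F where "F = {z \<in> Qb q. snd z - (lfun n a v + lfun n a v) * fst z = - (lfun n a v * lfun n a v) - (a n)^2}"
    have g: "\<forall>v'\<in>set q. \<not> (lfun n a v < lfun n a v' \<and> lfun n a v' < lfun n a v)" by auto
    have g2: "\<not> (v = negv (unitv n) \<and> v = unitv n)" by auto
    note fa = FACE[OF mq np v v order.refl g g2 refl refl F_def]
    have "F = {pib q v}" using fa(4) by simp
    then show ?thesis using fa(2,3) by auto
  qed
  have edge: "\<exists>E. lower_edge (Qb q) E \<and> fseg (q ! j) (q ! (j + 1)) = {x \<in> cross n. pib q x \<in> E}"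
    if j: "j + 1 < length q" for j
  proof -
    note ep = edge_prep[OF mq j]
    define s where "s = lfun n a (q ! j)"
    define t where "t = lfun n a (q ! (j+1))"
    define F where "F = {z \<in> Qb q. snd z - (s + t) * fst z = - (s * t) - (a n)^2}"
    note fa = FACE[OF mq np ep(1,2) less_imp_le[OF ep(3)] ep(4,5) s_def t_def F_def]
    have ne: "pib q (q ! j) \<noteq> pib q (q ! (j+1))" using ep(3) by (auto simp: pib_def)
    have "aff_dim F = 1"
      unfolding fa(4) segment_convex_hull aff_dim_convex_hull using ne by simp
    then have "lower_edge (Qb q) F" using fa(2,3) by (simp add: lower_edge_def)
    then show ?thesis using fa(5) by blast
  qed
  have lv: "set (map (pib q) q) = {p. lower_vertex (Qb q) p}"
  proof
    show "set (map (pib q) q) \<subseteq> {p. lower_vertex (Qb q) p}"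
      using vert by (auto simp: lower_vertex_def)
    show "{p. lower_vertex (Qb q) p} \<subseteq> set (map (pib q) q)"
    proof
      fix p assume "p \<in> {p. lower_vertex (Qb q) p}"
      then have pf: "{p} face_of Qb q" and pl: "lower_point (Qb q) p" by (simp_all add: lower_vertex_def)
      have pQ: "p \<in> Qb q" using pl by (simp add: lower_point_def)
      then obtain \<mu> where m: "\<forall>v\<in>cross_vertices n. 0 \<le> \<mu> v" "(\<Sum>v\<in>cross_vertices n. \<mu> v) = 1"
        "p = ((\<Sum>v\<in>cross_vertices n. \<mu> v * lfun n a v), (\<Sum>v\<in>cross_vertices n. \<mu> v * lfun n (bq q) v))"
        by (rule Qb_rep)
      define x0 where "x0 = fst p"
      have x0: "x0 = (\<Sum>v\<in>cross_vertices n. \<mu> v * lfun n a v)" using m(3) by (simp add: x0_def)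
      have pb1: "v \<in> cross_vertices n \<Longrightarrow> lfun n a v \<le> a n" for v
        using phi_abs[of v] by (simp add: abs_le_iff)
      have pb2: "v \<in> cross_vertices n \<Longrightarrow> - a n \<le> lfun n a v" for v
        using phi_abs[of v] by (simp add: abs_le_iff)
      have "(\<Sum>v\<in>cross_vertices n. \<mu> v * lfun n a v) \<le> (\<Sum>v\<in>cross_vertices n. \<mu> v * a n)"
        by (intro sum_mono mult_left_mono) (simp_all add: pb1 m(1))
      moreover have "(\<Sum>v\<in>cross_vertices n. \<mu> v * (- a n)) \<le> (\<Sum>v\<in>cross_vertices n. \<mu> v * lfun n a v)"
        by (intro sum_mono mult_left_mono) (simp_all add: pb2 m(1))
      moreover have "(\<Sum>v\<in>cross_vertices n. \<mu> v * a n) = a n"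
        using m(2) by (simp add: sum_distrib_right[symmetric])
      moreover have "(\<Sum>v\<in>cross_vertices n. \<mu> v * (- a n)) = - a n"
        using m(2) by (simp add: sum_negf sum_distrib_right[symmetric])
      ultimately have xb: "- a n \<le> x0" "x0 \<le> a n" unfolding x0 by auto
      have hdq: "hd (map (lfun n a) q) = - a n" using mq len n3
        by (cases q) (auto simp: monotone_path_def phi_ne)
      have lastq: "last (map (lfun n a) q) = a n" using mq len n3
        by (auto simp: monotone_path_def phi_e last_map)
      obtain j where j: "Suc j < length q" "lfun n a (q ! j) \<le> x0" "x0 \<le> lfun n a (q ! Suc j)"
        using cover_lemma[of "map (lfun n a) q" x0] len xb hdq lastq by auto
      have j1: "j + 1 < length q" using j by simp
      note ep = edge_prep[OF mq j1]
      define u where "u = q ! j"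
      define w where "w = q ! (j+1)"
      define s where "s = lfun n a u"
      define t where "t = lfun n a w"
      define F where "F = {z \<in> Qb q. snd z - (s + t) * fst z = - (s * t) - (a n)^2}"
      have uw: "u \<in> set q" "w \<in> set q" "s < t" using ep unfolding u_def w_def s_def t_def by auto
      note fa = FACE[OF mq np ep(1,2) less_imp_le[OF ep(3)] ep(4,5) s_def[unfolded u_def] t_def[unfolded w_def] F_def]
      have sx: "s \<le> x0" "x0 \<le> t" using j unfolding s_def t_def u_def w_def by auto
      define l where "l = (x0 - s) / (t - s)"
      have l: "0 \<le> l" "l \<le> 1" using sx uw(3) unfolding l_def by (auto simp: divide_simps)
      define z where "z = (1 - l) *\<^sub>R pib q u + l *\<^sub>R pib q w"
      have zF: "z \<in> F" unfolding fa(4) closed_segment_def z_def u_def w_def using l by blast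
      have zQ: "z \<in> Qb q" using zF unfolding F_def by blast
      have fz: "fst z = x0"
      proof -
        have "fst z = (1 - l) * s + l * t" by (simp add: z_def pib_def s_def t_def)
        also have "\<dots> = s + l * (t - s)" by (simp add: algebra_simps)
        also have "\<dots> = x0" using uw(3) by (simp add: l_def)
        finally show ?thesis .
      qed
      have "snd p \<le> snd z" using pl zQ fz unfolding lower_point_def x0_def by auto
      moreover have "snd z - (s + t) * fst p = - (s * t) - (a n)^2" using zF fz unfolding F_def x0_def by auto
      moreover have "0 \<le> snd p - (s + t) * fst p + s * t + (a n)^2" using fa(1) pQ by blast
      ultimately have "snd p = snd z" by linarith
      then have pz: "p = z" using fz unfolding x0_def by (simp add: prod_eq_iff)
      show "p \<in> set (map (pib q) q)"
      proof (rule ccontr)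
        assume nin: "p \<notin> set (map (pib q) q)"
        then have "p \<noteq> pib q u" "p \<noteq> pib q w" using uw by auto
        moreover have "p \<in> closed_segment (pib q u) (pib q w)" using pz zF fa(4) unfolding u_def w_def by simp
        ultimately have "p \<in> open_segment (pib q u) (pib q w)" by (simp add: open_segment_def)
        moreover have "pib q u \<in> Qb q" "pib q w \<in> Qb q"
          using vertex_in_cross mp_V[OF mq] uw by (auto simp: Qb_def)
        ultimately have "pib q u \<in> {p}" using pf unfolding face_of_def by blast
        then show False using \<open>p \<noteq> pib q u\<close> by simp
      qed
    qed
  qed
  have srt2: "sorted_wrt (\<lambda>p q. fst p < fst q) (map (pib q) q)"
    using srt by (simp add: sorted_wrt_map pib_def)
  have H: "set (map (pib q) q) = {p. lower_vertex (Qb q) p} \<and>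
        sorted_wrt (\<lambda>p q. fst p < fst q) (map (pib q) q) \<and>
        (\<forall>j. j + 1 < length q \<longrightarrow>
           (\<exists>E. lower_edge (Qb q) E \<and> fseg (q ! j) (q ! (j + 1)) = {x \<in> cross n. pib q x \<in> E}))"
    using lv srt2 edge by blast
  show ?thesis
    unfolding coherent_path_def Let_def
  proof (rule conjI[OF mq], rule exI[of _ "bq q"])
    show "set (map (\<lambda>x. (lfun n a x, lfun n (bq q) x)) q) = {p. lower_vertex ((\<lambda>x. (lfun n a x, lfun n (bq q) x)) ` cross n) p} \<and>
        sorted_wrt (\<lambda>p q. fst p < fst q) (map (\<lambda>x. (lfun n a x, lfun n (bq q) x)) q) \<and>
        (\<forall>j. j + 1 < length q \<longrightarrow>
           (\<exists>E. lower_edge ((\<lambda>x. (lfun n a x, lfun n (bq q) x)) ` cross n) E \<and>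
                fseg (q ! j) (q ! (j + 1)) = {x \<in> cross n. (lfun n a x, lfun n (bq q) x) \<in> E}))"
      by (rule H[unfolded Qb_def peq[symmetric]])
  qed
qed

lemma coherent_nopairs:
  assumes c: "coherent_path n a q"
  shows "pairs n q = {}"
proof (rule ccontr)
  assume "pairs n q \<noteq> {}"
  then obtain i where i: "i \<in> pairs n q" by blast
  then have i1: "1 \<le> i" "i < n" and ie: "unitv i \<in> set q" "negv (unitv i) \<in> set q"
    unfolding pairs_def by auto
  from c obtain b where H: "let \<pi> = (\<lambda>x. (lfun n a x, lfun n b x)); Q = \<pi> ` cross n in
        set (map \<pi> q) = {p. lower_vertex Q p}"
    unfolding coherent_path_def Let_def by blast
  define \<pi> where "\<pi> = (\<lambda>x. (lfun n a x, lfun n b x))"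
  define Q where "Q = \<pi> ` cross n"
  have lv: "set (map \<pi> q) = {p. lower_vertex Q p}" using H unfolding Let_def \<pi>_def Q_def by simp
  have L1: "lower_vertex Q (\<pi> (unitv i))" using lv ie by auto
  have L2: "lower_vertex Q (\<pi> (negv (unitv i)))" using lv ie by auto
  define en where "en = unitv n"
  define men where "men = negv (unitv n)"
  have enV: "en \<in> cross_vertices n" "men \<in> cross_vertices n" using n3
    unfolding en_def men_def cross_vertices_def by auto
  have ne: "men \<noteq> en" unfolding en_def men_def by simp
  have an: "0 < a n" by (rule an_pos)
  have ai: "0 < a i" "a i < a n" using a_pos[of i] a_mono[of i n] i1 by auto
  define r where "r = a i / a n"
  have r: "0 < r" "r < 1" "r * a n = a i" using ai an by (auto simp: r_def divide_simps)
  define l where "l = (1 + r) / 2"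
  have l: "0 \<le> l" "l \<le> 1" "0 \<le> 1 - l" "1 - l \<le> 1" using r by (auto simp: l_def)
  have pe: "\<pi> en = (a n, b n)" "\<pi> men = (- a n, - b n)" using n3
    by (auto simp: \<pi>_def en_def men_def lfun_unitv lfun_negv)
  have pv: "lfun n a en = a n" "lfun n b en = b n" "lfun n a men = - a n" "lfun n b men = - b n"
    using n3 by (auto simp: en_def men_def lfun_unitv lfun_negv)
  have pi_comb: "\<pi> (\<lambda>j. (1 - l') * men j + l' * en j) = ((2 * l' - 1) * a n, (2 * l' - 1) * b n)" for l'
  proof -
    have "\<pi> (\<lambda>j. (1 - l') * men j + l' * en j) =
      ((1 - l') * lfun n a men + l' * lfun n a en, (1 - l') * lfun n b men + l' * lfun n b en)"
      by (simp only: \<pi>_def lfun_comb)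
    also have "\<dots> = ((2 * l' - 1) * a n, (2 * l' - 1) * b n)"
      unfolding pv by (simp add: algebra_simps)
    finally show ?thesis .
  qed
  define x1 where "x1 = (\<lambda>j. (1 - l) * men j + l * en j)"
  define x2 where "x2 = (\<lambda>j. (1 - (1 - l)) * men j + (1 - l) * en j)"
  have x12: "x1 \<in> cross n" "x2 \<in> cross n"
    using fseg_in_cross[OF enV(2) enV(1) ne] l unfolding x1_def x2_def fseg_def by blast+
  have px1: "\<pi> x1 = (a i, r * b n)" unfolding x1_def pi_comb using r by (simp add: l_def algebra_simps)
  have px2: "\<pi> x2 = (- a i, - (r * b n))" unfolding x2_def pi_comb using r by (simp add: l_def algebra_simps)
  have pei: "\<pi> (unitv i) = (a i, b i)" "\<pi> (negv (unitv i)) = (- a i, - b i)"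
    using i1 by (auto simp: \<pi>_def lfun_unitv lfun_negv)
  have "b i \<le> r * b n"
    using L1 x12(1) px1 pei unfolding lower_vertex_def lower_point_def Q_def by force
  moreover have "- b i \<le> - (r * b n)"
    using L2 x12(2) px2 pei unfolding lower_vertex_def lower_point_def Q_def by force
  ultimately have "b i = r * b n" by linarith
  then have eq: "\<pi> (unitv i) = \<pi> x1" using pei px1 by simp
  have "\<pi> x1 = (1 - l) *\<^sub>R \<pi> men + l *\<^sub>R \<pi> en"
    unfolding x1_def pi_comb pe by (simp add: algebra_simps)
  then have "\<pi> (unitv i) \<in> closed_segment (\<pi> men) (\<pi> en)"
    unfolding closed_segment_def eq using l by blast
  moreover have "\<pi> (unitv i) \<noteq> \<pi> men" "\<pi> (unitv i) \<noteq> \<pi> en" using pei pe ai an by auto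
  ultimately have "\<pi> (unitv i) \<in> open_segment (\<pi> men) (\<pi> en)" by (simp add: open_segment_def)
  moreover have "\<pi> men \<in> Q" "\<pi> en \<in> Q" using vertex_in_cross enV unfolding Q_def by auto
  moreover have "{\<pi> (unitv i)} face_of Q" using L1 by (simp add: lower_vertex_def)
  ultimately have "\<pi> men \<in> {\<pi> (unitv i)}" unfolding face_of_def by blast
  then show False using \<open>\<pi> (unitv i) \<noteq> \<pi> men\<close> by simp
qed

lemma reach:
  "monotone_path n a p \<Longrightarrow> card (pairs n p) = k \<Longrightarrow> \<exists>q. coherent_path n a q \<and> (p, q) \<in> (flip_rel n a) ^^ k"
proof (induction k arbitrary: p)
  case 0
  then have "pairs n p = {}" by simp
  then have "coherent_path n a p" using nopairs_coherent 0 by blast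
  moreover have "(p, p) \<in> (flip_rel n a) ^^ 0" by simp
  ultimately show ?case by blast
next
  case (Suc k)
  have "card (pairs n p) \<noteq> 0" using Suc.prems(2) by simp
  then have "pairs n p \<noteq> {}" by (metis card.empty)
  then obtain i where i: "i \<in> pairs n p" by blast
  obtain p' where p': "monotone_path n a p'" "pairs n p' = pairs n p - {i}" "(p, p') \<in> flip_rel n a"
    using delete_step[OF Suc.prems(1) i] by blast
  have "card (pairs n p') = card (pairs n p) - 1" using p'(2) i by (simp add: card_Diff_singleton)
  then have "card (pairs n p') = k" using Suc.prems(2) by simp
  then obtain q where q: "coherent_path n a q" "(p', q) \<in> (flip_rel n a) ^^ k" using Suc.IH[OF p'(1)] by blast
  have "(p, q) \<in> (flip_rel n a) ^^ Suc k" by (rule relpow_Suc_I2[OF p'(3) q(2)])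
  then show ?case using q(1) by blast
qed

end

theorem theorem1p1:
  fixes n :: nat and a :: "nat \<Rightarrow> real"
  assumes "n \<ge> 3"
    and "0 < a 1"
    and "\<forall>i. 1 \<le> i \<and> i < n \<longrightarrow> a i < a (i + 1)"
  shows "(\<forall>p. monotone_path n a p \<longrightarrow>
            (\<exists>q k. coherent_path n a q \<and> k \<le> n - 2 \<and> (p, q) \<in> (flip_rel n a) ^^ k))
       \<and> monotone_path n a (extremal_path n)
       \<and> \<not> (\<exists>q k. coherent_path n a q \<and> k < n - 2 \<and> (extremal_path n, q) \<in> (flip_rel n a) ^^ k)"
proof -
  interpret cpx n a using assms by (unfold_locales) auto
  have P1: "\<forall>p. monotone_path n a p \<longrightarrow>
            (\<exists>q k. coherent_path n a q \<and> k \<le> n - 2 \<and> (p, q) \<in> (flip_rel n a) ^^ k)"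
  proof (intro allI impI)
    fix p assume mp: "monotone_path n a p"
    obtain q where "coherent_path n a q" "(p, q) \<in> (flip_rel n a) ^^ card (pairs n p)"
      using reach[OF mp refl] by blast
    then show "\<exists>q k. coherent_path n a q \<and> k \<le> n - 2 \<and> (p, q) \<in> (flip_rel n a) ^^ k"
      using card_pairs_le[OF mp] by blast
  qed
  have P3: "\<not> (\<exists>q k. coherent_path n a q \<and> k < n - 2 \<and> (extremal_path n, q) \<in> (flip_rel n a) ^^ k)"
  proof
    assume "\<exists>q k. coherent_path n a q \<and> k < n - 2 \<and> (extremal_path n, q) \<in> (flip_rel n a) ^^ k"
    then obtain q k where q: "coherent_path n a q" "k < n - 2" "(extremal_path n, q) \<in> (flip_rel n a) ^^ k"
      by blast
    have "card (pairs n (extremal_path n)) \<le> card (pairs n q) + k" by (rule flip_relpow[OF q(3)])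
    moreover have "pairs n q = {}" by (rule coherent_nopairs[OF q(1)])
    moreover have "card (pairs n (extremal_path n)) = n - 2" by (simp add: extremal_pairs)
    ultimately show False using q(2) by simp
  qed
  show ?thesis using P1 extremal_mp P3 by blast
qed



end
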